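(* Let $\bm{H}$ be a random matrix with values in $\mathbb{C}^{N_R\times N_T}$, $p$ a nonnegative random variable (random transmit power), $\lambda_{\max}$ the maximum eigenvalue of $\bm{H}\bm{H}^\ast$, and $c=W\log_2\det(\bm{I}_{N_R}+\frac{1}{N_TN_0W}p\bm{H}\bm{H}^\ast)$ with constants $W,N_0>0$. Consider the conditions (each with "for some $\theta>0$"): (0) $\mathbb{E}[(1+p\lambda_{\max})^\theta]<\infty$; (1) $\mathbb{E}[(1+p\operatorname{Tr}[\bm{H}\bm{H}^\ast])^\theta]<\infty$; (2) $\mathbb{E}[(\operatorname{Tr}[\bm{I}+p\bm{H}\bm{H}^\ast])^\theta]<\infty$; (3) $\mathbb{E}[(\operatorname{Tr}[e^{p\bm{H}\bm{H}^\ast}])^\theta]<\infty$; (4) $\mathbb{E}[e^{\theta p\lambda_{\max}}]<\infty$; (5) $\mathbb{E}[\operatorname{Tr}[e^{\theta p\bm{H}\bm{H}^\ast}]]<\infty$; (6) $\mathbb{E}[(p\lambda_{\max})^\theta]<\infty$; (7) $\mathbb{E}[e^{\theta p\operatorname{Tr}[\bm{H}\bm{H}^\ast]}]<\infty$. Then (0)$\iff$(1), (2)$\Rightarrow$(1), (3)$\Rightarrow$(2), (4)$\Rightarrow$(1), (5)$\Rightarrow$(4), (0)$\iff$(6), (4)$\iff$(7), and each of these conditions is sufficient for the distribution of $c$ to be light-tailed.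
   Context: A nonnegative random variable $X$ is light-tailed if $\Pr(X>x)=O(e^{-\theta x})$ for some $\theta>0$, equivalently $\mathbb{E}[e^{\theta X}]<\infty$ for some $\theta>0$. $e^{\bm{A}}$ denotes the matrix exponential. *)

theory Defs
  imports "HOL-Analysis.Analysis" "HOL-Probability.Probability" "HOL-Library.Landau_Symbols"
begin

definition ctrans :: "complex^'n^'m \<Rightarrow> complex^'m^'n" where
  "ctrans A = (\<chi> i j. cnj (A $ j $ i))"

primrec matpow :: "complex^'n^'n \<Rightarrow> nat \<Rightarrow> complex^'n^'n" where
  "matpow A 0 = mat 1"
| "matpow A (Suc k) = A ** matpow A k"

definition mexp :: "complex^'n^'n \<Rightarrow> complex^'n^'n" where
  "mexp A = (\<Sum>k. scaleR (1 / fact k) (matpow A k))"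

definition eigenvalue :: "complex^'n^'n \<Rightarrow> complex \<Rightarrow> bool" where
  "eigenvalue A \<mu> \<longleftrightarrow> (\<exists>v. v \<noteq> 0 \<and> A *v v = \<mu> *s v)"

definition lambda_max :: "complex^'n^'n \<Rightarrow> real" where
  "lambda_max A = Max {\<mu>::real. eigenvalue A (complex_of_real \<mu>)}"

definition light_tailed :: "'a measure \<Rightarrow> ('a \<Rightarrow> real) \<Rightarrow> bool" where
  "light_tailed M X \<longleftrightarrow> (\<exists>\<theta>>0. (\<lambda>x. measure M {\<omega>\<in>space M. X \<omega> > x}) \<in> O[at_top](\<lambda>x. exp (- \<theta> * x)))"

definition finite_exp :: "'a measure \<Rightarrow> ('a \<Rightarrow> real) \<Rightarrow> bool" where
  "finite_exp M f \<longleftrightarrow> (\<integral>\<^sup>+ \<omega>. ennreal (f \<omega>) \<partial>M) < \<infinity>"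

end

theory Submission
  imports Defs
begin

lemma norm_sq_vec: "(norm (x::'a::real_normed_vector^'n))^2 = (\<Sum>i\<in>UNIV. (norm (x$i))^2)"
  by (simp add: norm_vec_def L2_set_def sum_nonneg)

lemma cmod_mv_le: "cmod ((B *v x)$i) \<le> norm (B$i) * norm (x::complex^'n)"
proof -
  have "cmod ((B *v x)$i) = cmod (\<Sum>j\<in>UNIV. B$i$j * x$j)" by (simp add: matrix_vector_mult_def)
  also have "\<dots> \<le> (\<Sum>j\<in>UNIV. \<bar>cmod (B$i$j)\<bar> * \<bar>cmod (x$j)\<bar>)"
    by (rule order_trans[OF norm_sum]) (simp add: norm_mult)
  also have "\<dots> \<le> L2_set (\<lambda>j. cmod (B$i$j)) UNIV * L2_set (\<lambda>j. cmod (x$j)) UNIV"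
    by (rule L2_set_mult_ineq)
  also have "\<dots> = norm (B$i) * norm x" by (simp add: norm_vec_def)
  finally show ?thesis .
qed

lemma norm_mv_le: "norm (B *v x) \<le> norm B * norm (x::complex^'n)"
proof -
  have "(norm (B *v x))^2 = (\<Sum>i\<in>UNIV. (cmod ((B *v x)$i))^2)" by (rule norm_sq_vec)
  also have "\<dots> \<le> (\<Sum>i\<in>UNIV. (norm (B$i) * norm x)^2)"
    by (intro sum_mono power_mono cmod_mv_le) simp
  also have "\<dots> = (norm B)^2 * (norm x)^2"
    by (simp add: power_mult_distrib sum_distrib_right norm_sq_vec[of B])
  also have "\<dots> = (norm B * norm x)^2" by (simp add: power_mult_distrib)
  finally show ?thesis by (rule power2_le_imp_le) simp
qed

lemma ctrans_ctrans[simp]: "ctrans (ctrans A) = A"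
  by (simp add: ctrans_def vec_eq_iff)

lemma ctrans_mult: "ctrans (A ** B) = ctrans B ** ctrans A"
  by (simp add: ctrans_def matrix_matrix_mult_def vec_eq_iff mult.commute)

lemma ctrans_diff: "ctrans (A - B) = ctrans A - ctrans B"
  by (simp add: ctrans_def vec_eq_iff)

lemma ctrans_mat1[simp]: "ctrans (mat 1 :: complex^'n^'n) = mat 1"
  by (simp add: ctrans_def vec_eq_iff mat_def)

lemma norm_ctrans: "norm (ctrans A) = norm A"
proof -
  have "(norm (ctrans A))^2 = (norm A)^2"
    unfolding norm_sq_vec[of "ctrans A"] norm_sq_vec[of A]
    apply (simp add: norm_sq_vec[where 'a=complex] ctrans_def)
    by (rule sum.swap)
  thus ?thesis by (simp add: power2_eq_iff_nonneg)
qed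

lemma inner_complex_Re: "inner (z::complex) w = Re (z * cnj w)"
  by (simp add: inner_complex_def)

lemma adj: "inner (B *v u) w = inner u (ctrans B *v w)" for B :: "complex^'n^'m"
proof -
  have "inner (B *v u) w = (\<Sum>i\<in>UNIV. \<Sum>j\<in>UNIV. Re (B$i$j * u$j * cnj (w$i)))"
    by (simp add: inner_vec_def matrix_vector_mult_def inner_complex_Re sum_distrib_right Re_sum)
  also have "\<dots> = (\<Sum>j\<in>UNIV. \<Sum>i\<in>UNIV. Re (B$i$j * u$j * cnj (w$i)))" by (rule sum.swap)
  also have "\<dots> = inner u (ctrans B *v w)"
    by (simp add: inner_vec_def matrix_vector_mult_def inner_complex_Re sum_distrib_left Re_sum ctrans_def mult_ac)
  finally show ?thesis .
qed


lemma mv_scaleR: "A *v (c *\<^sub>R x) = c *\<^sub>R (A *v (x::complex^'n))"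
  by (simp add: vec_eq_iff matrix_vector_mult_def) (simp add: scaleR_conv_of_real sum_distrib_left mult_ac)

definition mm :: "complex^'m^'n \<Rightarrow> real" where
  "mm A = Sup ((\<lambda>u. (norm (A *v u))^2) ` sphere 0 1)"

lemma sphere_ne: "sphere (0::complex^'n) 1 \<noteq> {}"
proof -
  obtain b where "b \<in> (Basis :: (complex^'n) set)" using nonempty_Basis by blast
  hence "norm b = 1" by simp
  thus ?thesis by auto
qed

lemma mm_attained:
  "\<exists>u. norm u = 1 \<and> (norm (A *v u))^2 = mm A \<and> (\<forall>v. norm v = 1 \<longrightarrow> (norm (A *v v))^2 \<le> mm A)"
proof -
  have c: "continuous_on (sphere 0 1) (\<lambda>u. (norm (A *v u))^2)"
    by (intro continuous_intros linear_continuous_on matrix_vector_mul_bounded_linear)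
  obtain x where x: "x \<in> sphere 0 1" "\<forall>y\<in>sphere 0 1. (norm (A *v y))^2 \<le> (norm (A *v x))^2"
    using continuous_attains_sup[OF compact_sphere sphere_ne c] by blast
  have "mm A = (norm (A *v x))^2" unfolding mm_def
    by (rule cSup_eq_maximum) (use x in auto)
  with x show ?thesis by auto
qed

lemma mm_nonneg: "0 \<le> mm A"
  using mm_attained[of A] by (metis zero_le_power2)

lemma mm_bound: "(norm (A *v x))^2 \<le> mm A * (norm x)^2"
proof (cases "x = 0")
  case True thus ?thesis by simp
next
  case False
  let ?u = "(1 / norm x) *\<^sub>R x"
  have "norm ?u = 1" using False by simp
  hence "(norm (A *v ?u))^2 \<le> mm A" using mm_attained[of A] by blast
  moreover have "A *v ?u = (1 / norm x) *\<^sub>R (A *v x)" by (rule mv_scaleR)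
  ultimately have "(norm (A *v x))^2 / (norm x)^2 \<le> mm A"
    by (simp add: power_divide)
  thus ?thesis using False by (simp add: divide_le_eq)
qed

lemma quad_zero:
  fixes d e :: real
  assumes "\<And>t. 2*t*d + t^2*e \<le> 0"
  shows "d = 0"
proof (rule ccontr)
  assume "d \<noteq> 0"
  obtain k where k: "k = \<bar>e\<bar> + 1" by blast
  define t where "t = d / k"
  have pos: "k > 0" using k by simp
  have "2*t*d + t^2*e = d^2 * (2*k + e) / k^2"
    using pos by (simp add: t_def field_simps power2_eq_square)
  also have "\<dots> > 0" using \<open>d \<noteq> 0\<close> pos k by (intro divide_pos_pos mult_pos_pos) (auto simp: abs_if)
  finally show False using assms[of t] by simp
qed

lemma norm_add_scaled_sq:
  fixes a b :: "'a::real_inner"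
  shows "(norm (a + t *\<^sub>R b))^2 = (norm a)^2 + 2*t*(inner a b) + t^2*(norm b)^2"
  unfolding power2_norm_eq_inner
  by (simp add: inner_add_left inner_add_right inner_commute power2_eq_square algebra_simps)

lemma ofreal_smult: "(complex_of_real r) *s v = r *\<^sub>R v"
  by (simp add: vec_eq_iff) (simp add: scaleR_conv_of_real)

lemma G_inner: "inner ((H ** ctrans H) *v v) w = inner (ctrans H *v v) (ctrans H *v w)"
  for H :: "complex^'m^'n"
  by (simp add: matrix_vector_mul_assoc[symmetric] adj)

lemma G_eigvec:
  fixes H :: "complex^'m^'n"
  assumes u: "norm u = 1" "(norm (ctrans H *v u))^2 = mm (ctrans H)"
  shows "(H ** ctrans H) *v u = mm (ctrans H) *\<^sub>R u"
proof -
  let ?A = "ctrans H" let ?m = "mm (ctrans H)" let ?G = "H ** ctrans H"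
  have "inner (?A *v u) (?A *v w) - ?m * inner u w = 0" for w
  proof (rule quad_zero)
    fix t :: real
    have "(norm (?A *v (u + t *\<^sub>R w)))^2 \<le> ?m * (norm (u + t *\<^sub>R w))^2" by (rule mm_bound)
    moreover have "?A *v (u + t *\<^sub>R w) = ?A *v u + t *\<^sub>R (?A *v w)"
      by (simp add: matrix_vector_right_distrib mv_scaleR)
    ultimately have "(norm (?A *v u))^2 + 2*t*(inner (?A *v u) (?A *v w)) + t^2*(norm (?A *v w))^2
        \<le> ?m * ((norm u)^2 + 2*t*(inner u w) + t^2*(norm w)^2)"
      by (simp add: norm_add_scaled_sq)
    hence "?m + 2*t*(inner (?A *v u) (?A *v w)) + t^2*(norm (?A *v w))^2
        \<le> ?m * (1 + 2*t*(inner u w) + t^2*(norm w)^2)" using u by simp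
    moreover have "t^2 * ((norm (?A *v w))^2 - ?m * (norm w)^2) \<le> 0"
      using mm_bound[of ?A w] by (simp add: mult_nonneg_nonpos)
    ultimately show "2*t*(inner (?A *v u) (?A *v w) - ?m * inner u w) + t^2 * ((norm (?A *v w))^2 - ?m * (norm w)^2) \<le> 0"
      by (simp add: algebra_simps)
  qed
  hence "inner (?G *v u - ?m *\<^sub>R u) w = 0" for w
    by (simp add: inner_diff_left G_inner)
  from this[of "?G *v u - ?m *\<^sub>R u"] show ?thesis by simp
qed


lemma eig_le:
  fixes H :: "complex^'m^'n"
  assumes "(H ** ctrans H) *v v = complex_of_real \<mu> *s v" "v \<noteq> 0"
  shows "\<mu> \<le> mm (ctrans H)"
proof -
  have "inner ((H ** ctrans H) *v v) v = \<mu> * (norm v)^2"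
    using assms(1) by (simp add: ofreal_smult power2_norm_eq_inner)
  moreover have "inner ((H ** ctrans H) *v v) v = (norm (ctrans H *v v))^2"
    by (simp add: G_inner power2_norm_eq_inner)
  ultimately have "\<mu> * (norm v)^2 \<le> mm (ctrans H) * (norm v)^2" using mm_bound by metis
  thus ?thesis using assms(2) by simp
qed

lemma eig_orth:
  fixes H :: "complex^'m^'n"
  assumes "(H ** ctrans H) *v v = complex_of_real \<mu> *s v"
    "(H ** ctrans H) *v w = complex_of_real \<nu> *s w" "\<mu> \<noteq> \<nu>"
  shows "inner v w = 0"
proof -
  have "inner ((H ** ctrans H) *v v) w = inner ((H ** ctrans H) *v w) v"
    by (simp only: G_inner) (rule inner_commute)
  hence "\<mu> * inner v w = \<nu> * inner v w" using assms(1,2) by (simp add: ofreal_smult inner_commute)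
  thus ?thesis using assms(3) by simp
qed

lemma lambda_max_eq:
  fixes H :: "complex^'m^'n"
  shows "lambda_max (H ** ctrans H) = mm (ctrans H)"
proof -
  let ?G = "H ** ctrans H"
  let ?E = "{\<mu>::real. eigenvalue ?G (complex_of_real \<mu>)}"
  define vv where "vv \<mu> = (SOME v. v \<noteq> 0 \<and> ?G *v v = complex_of_real \<mu> *s v)" for \<mu>
  have vv: "vv \<mu> \<noteq> 0 \<and> ?G *v vv \<mu> = complex_of_real \<mu> *s vv \<mu>" if "\<mu> \<in> ?E" for \<mu>
    using that unfolding vv_def eigenvalue_def mem_Collect_eq by (rule someI_ex)
  have inj: "inj_on vv ?E"
  proof (rule inj_onI)
    fix x y assume xy: "x \<in> ?E" "y \<in> ?E" "vv x = vv y"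
    show "x = y"
    proof (rule ccontr)
      assume "x \<noteq> y"
      hence "inner (vv x) (vv y) = 0" using vv[OF xy(1)] vv[OF xy(2)] eig_orth by blast
      thus False using xy(3) vv[OF xy(2)] by simp
    qed
  qed
  have "pairwise orthogonal (vv ` ?E)"
    unfolding pairwise_def orthogonal_def
  proof (intro ballI impI)
    fix a b assume "a \<in> vv ` ?E" "b \<in> vv ` ?E" "a \<noteq> b"
    then obtain x y where "x \<in> ?E" "y \<in> ?E" "a = vv x" "b = vv y" "x \<noteq> y" by blast
    thus "inner a b = 0" using vv eig_orth by blast
  qed
  moreover have "0 \<notin> vv ` ?E" using vv by fastforce
  ultimately have "independent (vv ` ?E)" by (rule pairwise_orthogonal_independent)
  hence "finite (vv ` ?E)" by (rule independent_imp_finite)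
  hence fin: "finite ?E" using inj by (rule finite_imageD)
  obtain u where u: "norm u = 1" "(norm (ctrans H *v u))^2 = mm (ctrans H)"
    using mm_attained by blast
  have "mm (ctrans H) \<in> ?E"
    unfolding eigenvalue_def using G_eigvec[OF u] u(1)
    by (intro CollectI exI[of _ u]) (auto simp: ofreal_smult)
  moreover have "\<mu> \<le> mm (ctrans H)" if "\<mu> \<in> ?E" for \<mu>
    using vv[OF that] eig_le by blast
  ultimately show ?thesis unfolding lambda_max_def using fin by (intro Max_eqI) auto
qed

lemma trace_HH: "Re (trace (H ** ctrans H)) = (norm H)^2" for H :: "complex^'m^'n"
proof -
  have "Re (trace (H ** ctrans H)) = (\<Sum>i\<in>UNIV. \<Sum>k\<in>UNIV. Re (H$i$k * cnj (H$i$k)))"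
    by (simp add: trace_def matrix_matrix_mult_def ctrans_def Re_sum)
  also have "\<dots> = (\<Sum>i\<in>UNIV. \<Sum>k\<in>UNIV. (cmod (H$i$k))^2)"
    by (simp add: complex_norm_square[symmetric] del: Re_complex_of_real) (simp)
  also have "\<dots> = (norm H)^2" by (simp add: norm_sq_vec[of H] norm_sq_vec[where 'a=complex])
  finally show ?thesis .
qed

lemma mm_le_trace: "mm (ctrans H) \<le> (norm H)^2" for H :: "complex^'m^'n"
proof -
  obtain u where u: "norm u = 1" "(norm (ctrans H *v u))^2 = mm (ctrans H)"
    using mm_attained by blast
  have "norm (ctrans H *v u) \<le> norm H" using norm_mv_le[of "ctrans H" u] u(1) by (simp add: norm_ctrans)
  hence "(norm (ctrans H *v u))^2 \<le> (norm H)^2" by (simp add: power_mono)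
  thus ?thesis using u by simp
qed

lemma norm_axis_c: "norm (axis j (1::complex)) = 1"
proof -
  have eq: "(\<lambda>i. (cmod (axis j (1::complex) $ i))^2) = (\<lambda>i. if i = j then 1 else 0)"
    by (auto simp: axis_def)
  show ?thesis unfolding norm_vec_def L2_set_def eq by simp
qed

lemma trace_le_mm: "(norm H)^2 \<le> real CARD('n) * mm (ctrans H)" for H :: "complex^'m^'n"
proof -
  let ?A = "ctrans H"
  have col: "(?A *v axis j 1)$k = ?A$k$j" for j k
    by (simp add: matrix_vector_mult_def axis_def if_distrib cong: if_cong)
  have "(norm H)^2 = (norm ?A)^2" by (simp add: norm_ctrans)
  also have "\<dots> = (\<Sum>k\<in>UNIV. \<Sum>j\<in>UNIV. (cmod (?A$k$j))^2)"
    by (simp add: norm_sq_vec[of ?A] norm_sq_vec[where 'a=complex])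
  also have "\<dots> = (\<Sum>j\<in>UNIV. \<Sum>k\<in>UNIV. (cmod (?A$k$j))^2)" by (rule sum.swap)
  also have "\<dots> = (\<Sum>j\<in>(UNIV::'n set). (norm (?A *v axis j 1))^2)"
    by (simp add: norm_sq_vec[where 'a=complex] col)
  also have "\<dots> \<le> (\<Sum>j\<in>(UNIV::'n set). mm ?A)"
    by (intro sum_mono) (metis mm_bound norm_axis_c mult.right_neutral power_one)
  also have "\<dots> = real CARD('n) * mm ?A" by simp
  finally show ?thesis .
qed

lemma sqrt_mm_lip: "sqrt (mm A) \<le> sqrt (mm B) + norm (A - B)" for A B :: "complex^'m^'n"
proof -
  obtain u where u: "norm u = 1" "(norm (A *v u))^2 = mm A"
    using mm_attained by blast
  have "sqrt (mm A) = norm (A *v u)" using u(2) by (metis norm_ge_zero real_sqrt_abs abs_of_nonneg real_sqrt_pow2 power2_eq_square real_sqrt_unique)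
  also have "A *v u = B *v u + (A - B) *v u" by (simp add: matrix_vector_mult_diff_rdistrib)
  also have "norm \<dots> \<le> norm (B *v u) + norm ((A - B) *v u)" by (rule norm_triangle_ineq)
  also have "norm (B *v u) \<le> sqrt (mm B)"
    using mm_bound[of B u] u(1) by (simp add: real_le_rsqrt)
  also have "norm ((A - B) *v u) \<le> norm (A - B)" using norm_mv_le[of "A - B" u] u(1) by simp
  finally show ?thesis by simp
qed

lemma cont_sqrt_mm: "continuous_on UNIV (\<lambda>H::complex^'m^'n. sqrt (mm (ctrans H)))"
proof (rule lipschitz_on_continuous_on)
  show "1-lipschitz_on UNIV (\<lambda>H::complex^'m^'n. sqrt (mm (ctrans H)))"
  proof (rule lipschitz_onI)
    fix x y :: "complex^'m^'n"
    have "norm (ctrans x - ctrans y) = dist x y"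
      by (simp add: ctrans_diff[symmetric] norm_ctrans dist_norm)
    moreover have "norm (ctrans y - ctrans x) = dist x y"
      by (simp add: ctrans_diff[symmetric] norm_ctrans dist_norm norm_minus_commute)
    ultimately show "dist (sqrt (mm (ctrans x))) (sqrt (mm (ctrans y))) \<le> 1 * dist x y"
      using sqrt_mm_lip[of "ctrans x" "ctrans y"] sqrt_mm_lip[of "ctrans y" "ctrans x"]
      by (simp add: dist_real_def abs_le_iff)
  qed simp
qed

lemma row_mult: "(X ** Y)$i = transpose Y *v (X$i)" for X :: "complex^'k^'m" and Y :: "complex^'n^'k"
  by (simp add: vec_eq_iff matrix_matrix_mult_def matrix_vector_mult_def transpose_def mult.commute)

lemma norm_transpose: "norm (transpose Y) = norm (Y::complex^'n^'k)"
proof -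
  have "(norm (transpose Y))^2 = (norm Y)^2"
    unfolding norm_sq_vec[of "transpose Y"] norm_sq_vec[of Y]
    apply (simp add: norm_sq_vec[where 'a=complex] transpose_def)
    by (rule sum.swap)
  thus ?thesis by (simp add: power2_eq_iff_nonneg)
qed

lemma norm_mm_le: "norm (X ** Y) \<le> norm X * norm Y" for X :: "complex^'k^'m" and Y :: "complex^'n^'k"
proof -
  have tb: "norm (transpose Y *v x) \<le> norm Y * norm x" for x
    by (metis norm_mv_le norm_transpose)
  have "(norm (X ** Y))^2 = (\<Sum>i\<in>UNIV. (norm ((X ** Y)$i))^2)" by (rule norm_sq_vec)
  also have "\<dots> \<le> (\<Sum>i\<in>UNIV. (norm Y * norm (X$i))^2)"
    unfolding row_mult
    by (intro sum_mono power_mono tb) simp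
  also have "\<dots> = (norm X)^2 * (norm Y)^2"
    by (simp add: power_mult_distrib sum_distrib_left norm_sq_vec[of X] mult.commute)
  also have "\<dots> = (norm X * norm Y)^2" by (simp add: power_mult_distrib)
  finally show ?thesis by (rule power2_le_imp_le) simp
qed

lemma matpow_bound: "norm (matpow X k) \<le> norm (mat 1 :: complex^'n^'n) * (norm X)^k"
  for X :: "complex^'n^'n"
proof (induction k)
  case 0 thus ?case by simp
next
  case (Suc k)
  have "norm (matpow X (Suc k)) \<le> norm X * norm (matpow X k)" by (simp add: norm_mm_le)
  also have "\<dots> \<le> norm X * (norm (mat 1 :: complex^'n^'n) * (norm X)^k)"
    by (intro mult_left_mono Suc.IH) simp
  finally show ?case by (simp add: mult_ac)
qed

lemma summable_mexp: "summable (\<lambda>k. (1 / fact k) *\<^sub>R matpow X k)" for X :: "complex^'n^'n"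
proof (rule summable_comparison_test')
  show "summable (\<lambda>k. norm (mat 1 :: complex^'n^'n) * (inverse (fact k) * (norm X)^k))"
    by (intro summable_mult summable_exp)
  fix k :: nat
  show "norm ((1 / fact k) *\<^sub>R matpow X k) \<le> norm (mat 1 :: complex^'n^'n) * (inverse (fact k) * (norm X)^k)"
    using matpow_bound[of X k]
    by (simp add: field_simps divide_right_mono)
qed

lemma scaleR_mm_left: "(c *\<^sub>R X) ** Y = c *\<^sub>R (X ** Y)" for X :: "complex^'k^'m" and Y :: "complex^'n^'k"
  by (simp add: vec_eq_iff matrix_matrix_mult_def) (simp add: scaleR_conv_of_real sum_distrib_left mult_ac)

lemma scaleR_mm_right: "X ** (c *\<^sub>R Y) = c *\<^sub>R (X ** Y)" for X :: "complex^'k^'m" and Y :: "complex^'n^'k"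
  by (simp add: vec_eq_iff matrix_matrix_mult_def) (simp add: scaleR_conv_of_real sum_distrib_left mult_ac)

lemma matpow_scaleR: "matpow (c *\<^sub>R X) k = c^k *\<^sub>R matpow X k" for X :: "complex^'n^'n"
  by (induction k) (simp_all add: scaleR_mm_left scaleR_mm_right)

lemma retr_scaleR: "Re (trace (c *\<^sub>R X)) = c * Re (trace X)" for X :: "complex^'n^'n"
  by (simp add: trace_def sum_distrib_left)

lemma retr_add: "Re (trace (X + Y)) = Re (trace X) + Re (trace Y)" for X :: "complex^'n^'n"
  by (simp add: trace_add)

lemma bl_retr: "bounded_linear (\<lambda>X::complex^'n^'n. Re (trace X))"
  by (rule linear_conv_bounded_linear[THEN iffD1], rule linearI) (simp_all add: retr_add retr_scaleR)

lemma retr_mexp: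
  fixes X :: "complex^'n^'n"
  shows "Re (trace (mexp (s *\<^sub>R X))) = (\<Sum>k. (1 / fact k) * (s^k * Re (trace (matpow X k))))"
    and "summable (\<lambda>k. (1 / fact k) * (s^k * Re (trace (matpow X k))))"
proof -
  have sm: "summable (\<lambda>k. (1 / fact k) *\<^sub>R matpow (s *\<^sub>R X) k)" by (rule summable_mexp)
  have eq: "Re (trace ((1 / fact k) *\<^sub>R matpow (s *\<^sub>R X) k)) = (1 / fact k) * (s^k * Re (trace (matpow X k)))" for k
    by (simp add: matpow_scaleR retr_scaleR)
  show "Re (trace (mexp (s *\<^sub>R X))) = (\<Sum>k. (1 / fact k) * (s^k * Re (trace (matpow X k))))"
    unfolding mexp_def bounded_linear.suminf[OF bl_retr sm] eq ..
  show "summable (\<lambda>k. (1 / fact k) * (s^k * Re (trace (matpow X k))))"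
    using bounded_linear.summable[OF bl_retr sm] unfolding eq .
qed

lemma matpow_add: "matpow X (a + b) = matpow X a ** matpow X b" for X :: "complex^'n^'n"
  by (induction a) (simp_all add: matrix_mul_assoc)

lemma matpow_comm: "matpow X k ** X = X ** matpow X k" for X :: "complex^'n^'n"
  by (induction k) (simp_all add: matrix_mul_assoc[symmetric])

lemma ctrans_matpow: "ctrans X = X \<Longrightarrow> ctrans (matpow X k) = matpow X k" for X :: "complex^'n^'n"
  by (induction k) (simp_all add: ctrans_mult matpow_comm)

lemma matpow_mv: "X *v u = c *\<^sub>R u \<Longrightarrow> matpow X k *v u = c^k *\<^sub>R u" for X :: "complex^'n^'n"
  by (induction k) (simp_all add: matrix_vector_mul_assoc[symmetric] mv_scaleR)

lemma trace_ctX: "Re (trace (ctrans X ** X)) = (norm X)^2" for X :: "complex^'m^'n"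
  using trace_HH[of "ctrans X"] by (simp add: norm_ctrans)

lemma inner_ctX: "inner ((ctrans X ** X) *v u) u = (norm (X *v u))^2" for X :: "complex^'m^'n"
  by (simp add: matrix_vector_mul_assoc[symmetric] adj power2_norm_eq_inner)

lemma psd_props:
  fixes X :: "complex^'m^'n"
  assumes "B = ctrans X ** X" "norm u = 1"
  shows "inner (B *v u) u \<le> Re (trace B)"
proof -
  have "norm (X *v u) \<le> norm X" using norm_mv_le[of X u] assms(2) by simp
  hence "(norm (X *v u))^2 \<le> (norm X)^2" by (simp add: power_mono)
  thus ?thesis using assms(1) by (simp add: inner_ctX trace_ctX)
qed

lemma G_pow_trace:
  fixes H :: "complex^'m^'n"
  assumes "norm u = 1"
  shows "inner (matpow (H ** ctrans H) k *v u) u \<le> Re (trace (matpow (H ** ctrans H) k))"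
proof -
  let ?G = "H ** ctrans H"
  have hG: "ctrans ?G = ?G" by (simp add: ctrans_mult)
  have "\<exists>j. k = j + j \<or> k = j + (1 + j)" by presburger
  then obtain j where "k = j + j \<or> k = j + (1 + j)" by blast
  thus ?thesis
  proof
    assume k: "k = j + j"
    have "matpow ?G k = ctrans (matpow ?G j) ** matpow ?G j"
      by (simp add: k matpow_add ctrans_matpow[OF hG])
    thus ?thesis by (rule psd_props[OF _ assms])
  next
    assume k: "k = j + (1 + j)"
    have "matpow ?G k = matpow ?G j ** matpow ?G (Suc j)"
      unfolding k matpow_add[symmetric] by simp
    also have "\<dots> = ctrans (ctrans H ** matpow ?G j) ** (ctrans H ** matpow ?G j)"
      by (simp add: ctrans_matpow[OF hG] ctrans_mult matrix_mul_assoc)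
    finally have "matpow ?G k = ctrans (ctrans H ** matpow ?G j) ** (ctrans H ** matpow ?G j)" .
    thus ?thesis by (rule psd_props[OF _ assms])
  qed
qed

lemma G_pow_trace_ge:
  fixes H :: "complex^'m^'n"
  shows "(mm (ctrans H))^k \<le> Re (trace (matpow (H ** ctrans H) k))"
proof -
  obtain u where u: "norm u = 1" "(norm (ctrans H *v u))^2 = mm (ctrans H)"
    using mm_attained by blast
  have "matpow (H ** ctrans H) k *v u = (mm (ctrans H))^k *\<^sub>R u"
    by (rule matpow_mv[OF G_eigvec[OF u]])
  hence "inner (matpow (H ** ctrans H) k *v u) u = (mm (ctrans H))^k"
    using u(1) by (simp add: power2_norm_eq_inner[symmetric])
  thus ?thesis using G_pow_trace[OF u(1), where H=H and k=k] by simp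
qed

lemma mexp_ge:
  fixes H :: "complex^'m^'n"
  assumes "s \<ge> 0"
  shows "exp (s * mm (ctrans H)) \<le> Re (trace (mexp (s *\<^sub>R (H ** ctrans H))))"
proof -
  have "exp (s * mm (ctrans H)) = (\<Sum>k. (s * mm (ctrans H))^k /\<^sub>R fact k)"
    using exp_converges[of "s * mm (ctrans H)"] by (simp add: sums_iff)
  also have "\<dots> \<le> (\<Sum>k. (1 / fact k) * (s^k * Re (trace (matpow (H ** ctrans H) k))))"
  proof (rule suminf_le)
    show "summable (\<lambda>k. (s * mm (ctrans H))^k /\<^sub>R fact k)"
      using exp_converges by (rule sums_summable)
    show "summable (\<lambda>k. (1 / fact k) * (s^k * Re (trace (matpow (H ** ctrans H) k))))"
      by (rule retr_mexp(2))
    fix k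
    show "(s * mm (ctrans H))^k /\<^sub>R fact k \<le> (1 / fact k) * (s^k * Re (trace (matpow (H ** ctrans H) k)))"
      using G_pow_trace_ge[of H k] assms
      by (simp add: power_mult_distrib divide_inverse mult_left_mono mult_ac)
  qed
  also have "\<dots> = Re (trace (mexp (s *\<^sub>R (H ** ctrans H))))" by (rule retr_mexp(1)[symmetric])
  finally show ?thesis .
qed

lemma mexp_ge2:
  fixes H :: "complex^'m^'n"
  assumes "s \<ge> 0"
  shows "real CARD('n) + s * (norm H)^2 \<le> Re (trace (mexp (s *\<^sub>R (H ** ctrans H))))"
proof -
  let ?f = "\<lambda>k. (1 / fact k) * (s^k * Re (trace (matpow (H ** ctrans H) k)))"
  have "(\<Sum>k<2. ?f k) \<le> suminf ?f"
  proof (rule sum_le_suminf)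
    show "summable ?f" by (rule retr_mexp(2))
    fix k assume "k \<in> - {..<2::nat}"
    have "0 \<le> (mm (ctrans H))^k" by (simp add: mm_nonneg)
    thus "0 \<le> ?f k" using G_pow_trace_ge[of H k] assms by simp
  qed simp
  moreover have "(\<Sum>k<2. ?f k) = real CARD('n) + s * (norm H)^2"
    by (simp add: numeral_2_eq_2 trace_I trace_HH)
  ultimately show ?thesis by (simp add: retr_mexp(1))
qed

lemma det_bound:
  fixes B :: "complex^'n^'n"
  assumes b: "\<And>i j. cmod (B$i$j) \<le> b"
  shows "cmod (det B) \<le> real (card {q. q permutes (UNIV::'n set)}) * b ^ CARD('n)"
proof -
  have b0: "0 \<le> b" using b[of undefined undefined] norm_ge_zero order_trans by blast
  have "cmod (det B) = cmod (\<Sum>q\<in>{q. q permutes (UNIV::'n set)}. of_int (sign q) * (\<Prod>i\<in>UNIV. B$i$q i))"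
    by (simp add: det_def)
  also have "\<dots> \<le> (\<Sum>q\<in>{q. q permutes (UNIV::'n set)}. cmod (of_int (sign q) * (\<Prod>i\<in>UNIV. B$i$q i)))"
    by (rule norm_sum)
  also have "\<dots> \<le> (\<Sum>q\<in>{q. q permutes (UNIV::'n set)}. b ^ CARD('n))"
  proof (rule sum_mono)
    fix q :: "'n \<Rightarrow> 'n"
    have s: "cmod (of_int (sign q)) = 1" by (cases q rule: sign_cases) simp_all
    have s2: "\<bar>real_of_int (sign q)\<bar> = 1" by (cases q rule: sign_cases) simp_all
    have "(\<Prod>i\<in>UNIV. cmod (B$i$q i)) \<le> (\<Prod>i\<in>(UNIV::'n set). b)"
      by (intro prod_mono) (simp add: b)
    thus "cmod (of_int (sign q) * (\<Prod>i\<in>UNIV. B$i$q i)) \<le> b ^ CARD('n)"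
      by (simp add: norm_mult s s2 prod_norm[symmetric])
  qed
  also have "\<dots> = real (card {q. q permutes (UNIV::'n set)}) * b ^ CARD('n)" by simp
  finally show ?thesis .
qed

lemma entry_bound:
  fixes H :: "complex^'m^'n"
  assumes "a \<ge> 0"
  shows "cmod ((mat 1 + a *\<^sub>R (H ** ctrans H))$i$j) \<le> 1 + a * (norm H)^2"
proof -
  have "cmod ((H ** ctrans H)$i$j) = cmod (\<Sum>k\<in>UNIV. H$i$k * cnj (H$j$k))"
    by (simp add: matrix_matrix_mult_def ctrans_def)
  also have "\<dots> \<le> (\<Sum>k\<in>UNIV. \<bar>cmod (H$i$k)\<bar> * \<bar>cmod (H$j$k)\<bar>)"
    by (rule order_trans[OF norm_sum]) (simp add: norm_mult)
  also have "\<dots> \<le> L2_set (\<lambda>k. cmod (H$i$k)) UNIV * L2_set (\<lambda>k. cmod (H$j$k)) UNIV"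
    by (rule L2_set_mult_ineq)
  also have "\<dots> = norm (H$i) * norm (H$j)" by (simp add: norm_vec_def)
  also have "\<dots> \<le> norm H * norm H"
  proof -
    have r: "norm (H$l) \<le> norm H" for l unfolding norm_vec_def by (rule member_le_L2_set) simp_all
    show ?thesis using r[of i] r[of j] by (intro mult_mono) simp_all
  qed
  finally have g: "cmod ((H ** ctrans H)$i$j) \<le> (norm H)^2" by (simp add: power2_eq_square)
  have "cmod ((mat 1 + a *\<^sub>R (H ** ctrans H))$i$j) \<le> cmod ((mat 1 :: complex^'n^'n)$i$j) + cmod (a *\<^sub>R (H ** ctrans H)$i$j)"
    by (simp only: vector_add_component vector_scaleR_component) (rule norm_triangle_ineq)
  also have "\<dots> \<le> 1 + a * (norm H)^2"
    using g assms by (intro add_mono) (simp_all add: mat_def mult_left_mono)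
  finally show ?thesis .
qed

lemma fe_mono:
  assumes "finite_exp M g" "\<And>\<omega>. \<omega> \<in> space M \<Longrightarrow> f \<omega> \<le> g \<omega>"
  shows "finite_exp M f"
proof -
  have "(\<integral>\<^sup>+ \<omega>. ennreal (f \<omega>) \<partial>M) \<le> (\<integral>\<^sup>+ \<omega>. ennreal (g \<omega>) \<partial>M)"
    by (intro nn_integral_mono ennreal_leI assms(2))
  thus ?thesis using assms(1) unfolding finite_exp_def by (simp add: le_less_trans)
qed

lemma real_La:
  fixes x y \<theta> :: real and n :: nat
  assumes "0 \<le> x" "0 \<le> y" "y \<le> real n * x" "n \<ge> 1" "\<theta> > 0"
  shows "(1 + y) powr (\<theta> / real n) \<le> (1 + x) powr \<theta>"
proof -
  have "1 + y \<le> (1 + x)^n" using Bernoulli_inequality[of x n] assms by simp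
  hence "(1 + y) powr (\<theta> / real n) \<le> ((1 + x)^n) powr (\<theta> / real n)"
    using assms by (intro powr_mono2) simp_all
  also have "((1 + x)^n) powr (\<theta> / real n) = (1 + x) powr \<theta>"
    using assms by (simp add: powr_realpow[symmetric] powr_powr)
  finally show ?thesis .
qed

lemma real_Lb:
  fixes x y \<theta> :: real and n :: nat
  assumes "0 \<le> x" "0 \<le> y" "y \<le> real n * x" "n \<ge> 1" "\<theta> > 0"
  shows "(1 + y) powr (\<theta> / real n) \<le> exp (\<theta> * x)"
proof -
  have "1 + y \<le> exp (real n * x)" using assms exp_ge_add_one_self[of "real n * x"] by linarith
  hence "(1 + y) powr (\<theta> / real n) \<le> (exp (real n * x)) powr (\<theta> / real n)"
    using assms by (intro powr_mono2) simp_all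
  also have "(exp (real n * x)) powr (\<theta> / real n) = exp (\<theta> * x)"
    using assms by (simp add: powr_def)
  finally show ?thesis .
qed

lemma real_Lc:
  fixes x \<theta> :: real
  assumes "0 \<le> x" "\<theta> > 0"
  shows "(1 + x) powr \<theta> \<le> 2 powr \<theta> * (1 + x powr \<theta>)"
proof (cases "x \<le> 1")
  case True
  hence "(1 + x) powr \<theta> \<le> 2 powr \<theta>" using assms by (intro powr_mono2) simp_all
  also have "\<dots> \<le> 2 powr \<theta> * (1 + x powr \<theta>)" by simp
  finally show ?thesis .
next
  case False
  hence "(1 + x) powr \<theta> \<le> (2 * x) powr \<theta>" using assms by (intro powr_mono2) simp_all
  also have "\<dots> = 2 powr \<theta> * x powr \<theta>" using assms by (simp add: powr_mult)
  also have "\<dots> \<le> 2 powr \<theta> * (1 + x powr \<theta>)" by simp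
  finally show ?thesis .
qed

lemma markov_gen:
  assumes "prob_space M" "(\<integral>\<^sup>+ \<omega>. ennreal (f \<omega>) \<partial>M) < \<infinity>" "b > 0"
    "\<And>\<omega>. \<omega> \<in> space M \<Longrightarrow> \<omega> \<in> S \<Longrightarrow> b \<le> f \<omega>"
  shows "measure M S \<le> enn2real (\<integral>\<^sup>+ \<omega>. ennreal (f \<omega>) \<partial>M) / b"
proof (cases "S \<in> sets M")
  case False thus ?thesis using assms(3) by (simp add: measure_notin_sets divide_nonneg_pos)
next
  case True
  interpret prob_space M by fact
  let ?I = "\<integral>\<^sup>+ \<omega>. ennreal (f \<omega>) \<partial>M"
  have "(\<integral>\<^sup>+ \<omega>. ennreal b * indicator S \<omega> \<partial>M) \<le> ?I"
    by (intro nn_integral_mono) (auto simp: indicator_def intro: ennreal_leI assms(4))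
  moreover have "(\<integral>\<^sup>+ \<omega>. ennreal b * indicator S \<omega> \<partial>M) = ennreal (b * measure M S)"
    using True assms(3) by (simp add: nn_integral_cmult_indicator emeasure_eq_measure ennreal_mult)
  moreover have "?I = ennreal (enn2real ?I)" using assms(2) by simp
  ultimately have "ennreal (b * measure M S) \<le> ennreal (enn2real ?I)" by simp
  hence "b * measure M S \<le> enn2real ?I" by (simp add: ennreal_le_iff)
  thus ?thesis using assms(3) by (simp add: field_simps)
qed

theorem theorem6:
  fixes M :: "'a measure"
    and H :: "'a \<Rightarrow> complex^'nt^'nr"
    and p :: "'a \<Rightarrow> real"
    and W N0 :: real
  defines "G \<equiv> (\<lambda>\<omega>. H \<omega> ** ctrans (H \<omega>))"
  defines "lam \<equiv> (\<lambda>\<omega>. lambda_max (G \<omega>))"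
  defines "c \<equiv> (\<lambda>\<omega>. W * log 2 (Re (det (mat 1 + scaleR (p \<omega> / (real CARD('nt) * N0 * W)) (G \<omega>)))))"
  defines "C0 \<equiv> (\<exists>\<theta>>0. finite_exp M (\<lambda>\<omega>. (1 + p \<omega> * lam \<omega>) powr \<theta>))"
  defines "C1 \<equiv> (\<exists>\<theta>>0. finite_exp M (\<lambda>\<omega>. (1 + p \<omega> * Re (trace (G \<omega>))) powr \<theta>))"
  defines "C2 \<equiv> (\<exists>\<theta>>0. finite_exp M (\<lambda>\<omega>. (Re (trace (mat 1 + scaleR (p \<omega>) (G \<omega>)))) powr \<theta>))"
  defines "C3 \<equiv> (\<exists>\<theta>>0. finite_exp M (\<lambda>\<omega>. (Re (trace (mexp (scaleR (p \<omega>) (G \<omega>))))) powr \<theta>))"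
  defines "C4 \<equiv> (\<exists>\<theta>>0. finite_exp M (\<lambda>\<omega>. exp (\<theta> * p \<omega> * lam \<omega>)))"
  defines "C5 \<equiv> (\<exists>\<theta>>0. finite_exp M (\<lambda>\<omega>. Re (trace (mexp (scaleR (\<theta> * p \<omega>) (G \<omega>))))))"
  defines "C6 \<equiv> (\<exists>\<theta>>0. finite_exp M (\<lambda>\<omega>. (p \<omega> * lam \<omega>) powr \<theta>))"
  defines "C7 \<equiv> (\<exists>\<theta>>0. finite_exp M (\<lambda>\<omega>. exp (\<theta> * p \<omega> * Re (trace (G \<omega>)))))"
  assumes "prob_space M"
    and "H \<in> borel_measurable M"
    and "p \<in> borel_measurable M"
    and "\<forall>\<omega>\<in>space M. p \<omega> \<ge> 0"
    and "W > 0" and "N0 > 0"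
  shows "(C0 \<longleftrightarrow> C1) \<and> (C2 \<longrightarrow> C1) \<and> (C3 \<longrightarrow> C2) \<and> (C4 \<longrightarrow> C1) \<and> (C5 \<longrightarrow> C4)
         \<and> (C0 \<longleftrightarrow> C6) \<and> (C4 \<longleftrightarrow> C7)
         \<and> ((C0 \<or> C1 \<or> C2 \<or> C3 \<or> C4 \<or> C5 \<or> C6 \<or> C7) \<longrightarrow> light_tailed M c)"
proof -
  have ps: "prob_space M" by fact
  interpret prob_space M by (rule ps)
  have Hm: "H \<in> borel_measurable M" by fact
  have pm: "p \<in> borel_measurable M" by fact
  have pnn0: "\<forall>\<omega>\<in>space M. p \<omega> \<ge> 0" by fact
  have pnn: "\<And>\<omega>. \<omega> \<in> space M \<Longrightarrow> 0 \<le> p \<omega>" using pnn0 by blast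
  have W0: "W > 0" by fact
  have N00: "N0 > 0" by fact
  define n where "n = CARD('nr)"
  have n1: "n \<ge> 1" unfolding n_def by (simp add: Suc_leI)
  have lamE: "lam \<omega> = mm (ctrans (H \<omega>))" for \<omega> by (simp add: lam_def G_def lambda_max_eq)
  have tE: "Re (trace (G \<omega>)) = (norm (H \<omega>))^2" for \<omega> by (simp add: G_def trace_HH)
  have lam0: "0 \<le> lam \<omega>" for \<omega> by (simp add: lamE mm_nonneg)
  have lam_t: "lam \<omega> \<le> Re (trace (G \<omega>))" for \<omega> by (simp add: lamE tE mm_le_trace)
  have t_lam: "Re (trace (G \<omega>)) \<le> real n * lam \<omega>" for \<omega> by (simp add: lamE tE n_def trace_le_mm)
  have t0: "0 \<le> Re (trace (G \<omega>))" for \<omega> by (simp add: tE)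
  have xy: "p \<omega> * Re (trace (G \<omega>)) \<le> real n * (p \<omega> * lam \<omega>)" if "\<omega> \<in> space M" for \<omega>
    using mult_left_mono[OF t_lam pnn[OF that]] by (simp add: mult_ac)
  have x0: "0 \<le> p \<omega> * lam \<omega>" if "\<omega> \<in> space M" for \<omega> using pnn[OF that] lam0 by simp
  have y0: "0 \<le> p \<omega> * Re (trace (G \<omega>))" if "\<omega> \<in> space M" for \<omega> using pnn[OF that] t0 by simp
  have xley: "p \<omega> * lam \<omega> \<le> p \<omega> * Re (trace (G \<omega>))" if "\<omega> \<in> space M" for \<omega>
    using pnn[OF that] lam_t by (simp add: mult_left_mono)

  have h10: "C1 \<Longrightarrow> C0"
  proof -
    assume C1 then obtain \<theta> where th: "\<theta> > 0" "finite_exp M (\<lambda>\<omega>. (1 + p \<omega> * Re (trace (G \<omega>))) powr \<theta>)"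
      unfolding C1_def by blast
    have "finite_exp M (\<lambda>\<omega>. (1 + p \<omega> * lam \<omega>) powr \<theta>)"
      by (rule fe_mono[OF th(2)]) (intro powr_mono2, use th x0 xley in auto)
    thus C0 unfolding C0_def using th by blast
  qed
  have h01: "C0 \<Longrightarrow> C1"
  proof -
    assume C0 then obtain \<theta> where th: "\<theta> > 0" "finite_exp M (\<lambda>\<omega>. (1 + p \<omega> * lam \<omega>) powr \<theta>)"
      unfolding C0_def by blast
    have "finite_exp M (\<lambda>\<omega>. (1 + p \<omega> * Re (trace (G \<omega>))) powr (\<theta> / real n))"
      by (rule fe_mono[OF th(2)]) (rule real_La, use th x0 y0 xy n1 in auto)
    moreover have "\<theta> / real n > 0" using th n1 by simp
    ultimately show C1 unfolding C1_def by blast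
  qed
  have h21: "C2 \<Longrightarrow> C1"
  proof -
    assume C2 then obtain \<theta> where th: "\<theta> > 0"
      "finite_exp M (\<lambda>\<omega>. (Re (trace (mat 1 + scaleR (p \<omega>) (G \<omega>)))) powr \<theta>)"
      unfolding C2_def by blast
    have e: "Re (trace (mat 1 + scaleR (p \<omega>) (G \<omega>))) = real n + p \<omega> * Re (trace (G \<omega>))" for \<omega>
      by (simp add: retr_add retr_scaleR trace_I n_def)
    have "finite_exp M (\<lambda>\<omega>. (1 + p \<omega> * Re (trace (G \<omega>))) powr \<theta>)"
      by (rule fe_mono[OF th(2)]) (unfold e, intro powr_mono2, use th y0 n1 in auto)
    thus C1 unfolding C1_def using th by blast
  qed
  have h32: "C3 \<Longrightarrow> C2"
  proof -
    assume C3 then obtain \<theta> where th: "\<theta> > 0"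
      "finite_exp M (\<lambda>\<omega>. (Re (trace (mexp (scaleR (p \<omega>) (G \<omega>))))) powr \<theta>)"
      unfolding C3_def by blast
    have e: "Re (trace (mat 1 + scaleR (p \<omega>) (G \<omega>))) = real n + p \<omega> * Re (trace (G \<omega>))" for \<omega>
      by (simp add: retr_add retr_scaleR trace_I n_def)
    have le: "Re (trace (mat 1 + scaleR (p \<omega>) (G \<omega>))) \<le> Re (trace (mexp (scaleR (p \<omega>) (G \<omega>))))"
      if "\<omega> \<in> space M" for \<omega>
      using mexp_ge2[OF pnn[OF that], of "H \<omega>"] unfolding e tE by (simp add: G_def n_def)
    have "finite_exp M (\<lambda>\<omega>. (Re (trace (mat 1 + scaleR (p \<omega>) (G \<omega>)))) powr \<theta>)"
      by (rule fe_mono[OF th(2)]) (intro powr_mono2 le, use th y0 n1 e in auto)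
    thus C2 unfolding C2_def using th by blast
  qed
  have h41: "C4 \<Longrightarrow> C1"
  proof -
    assume C4 then obtain \<theta> where th: "\<theta> > 0" "finite_exp M (\<lambda>\<omega>. exp (\<theta> * p \<omega> * lam \<omega>))"
      unfolding C4_def by blast
    have "finite_exp M (\<lambda>\<omega>. (1 + p \<omega> * Re (trace (G \<omega>))) powr (\<theta> / real n))"
      by (rule fe_mono[OF th(2)]) (simp only: mult.assoc, rule real_Lb, use th x0 y0 xy n1 in auto)
    moreover have "\<theta> / real n > 0" using th n1 by simp
    ultimately show C1 unfolding C1_def by blast
  qed
  have h54: "C5 \<Longrightarrow> C4"
  proof -
    assume C5 then obtain \<theta> where th: "\<theta> > 0"
      "finite_exp M (\<lambda>\<omega>. Re (trace (mexp (scaleR (\<theta> * p \<omega>) (G \<omega>)))))"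
      unfolding C5_def by blast
    have "finite_exp M (\<lambda>\<omega>. exp (\<theta> * p \<omega> * lam \<omega>))"
    proof (rule fe_mono[OF th(2)])
      fix \<omega> assume "\<omega> \<in> space M"
      hence "0 \<le> \<theta> * p \<omega>" using th pnn by simp
      thus "exp (\<theta> * p \<omega> * lam \<omega>) \<le> Re (trace (mexp (scaleR (\<theta> * p \<omega>) (G \<omega>))))"
        using mexp_ge[of "\<theta> * p \<omega>" "H \<omega>"] by (simp add: lamE G_def)
    qed
    thus C4 unfolding C4_def using th by blast
  qed
  have h06: "C0 \<Longrightarrow> C6"
  proof -
    assume C0 then obtain \<theta> where th: "\<theta> > 0" "finite_exp M (\<lambda>\<omega>. (1 + p \<omega> * lam \<omega>) powr \<theta>)"
      unfolding C0_def by blast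
    have "finite_exp M (\<lambda>\<omega>. (p \<omega> * lam \<omega>) powr \<theta>)"
      by (rule fe_mono[OF th(2)]) (intro powr_mono2, use th x0 in auto)
    thus C6 unfolding C6_def using th by blast
  qed
  have mlam: "lam \<in> borel_measurable M"
  proof -
    have m1: "(\<lambda>\<omega>. sqrt (mm (ctrans (H \<omega>)))) \<in> borel_measurable M"
      using measurable_compose[OF Hm borel_measurable_continuous_onI[OF cont_sqrt_mm]] by simp
    have m2: "(\<lambda>\<omega>. (sqrt (mm (ctrans (H \<omega>))))^2) \<in> borel_measurable M"
      using m1 by measurable
    have "lam = (\<lambda>\<omega>. (sqrt (mm (ctrans (H \<omega>))))^2)"
      by (rule ext) (simp add: lamE mm_nonneg)
    thus ?thesis using m2 by simp
  qed
  have h60: "C6 \<Longrightarrow> C0"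
  proof -
    assume C6 then obtain \<theta> where th: "\<theta> > 0" "finite_exp M (\<lambda>\<omega>. (p \<omega> * lam \<omega>) powr \<theta>)"
      unfolding C6_def by blast
    let ?g = "\<lambda>\<omega>. (p \<omega> * lam \<omega>) powr \<theta>"
    have mg: "?g \<in> borel_measurable M" using pm mlam by measurable
    have "(\<integral>\<^sup>+ \<omega>. ennreal ((1 + p \<omega> * lam \<omega>) powr \<theta>) \<partial>M)
        \<le> (\<integral>\<^sup>+ \<omega>. ennreal (2 powr \<theta>) * (1 + ennreal (?g \<omega>)) \<partial>M)"
    proof (rule nn_integral_mono)
      fix \<omega> assume "\<omega> \<in> space M"
      hence "(1 + p \<omega> * lam \<omega>) powr \<theta> \<le> 2 powr \<theta> * (1 + ?g \<omega>)"
        using real_Lc x0 th by blast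
      hence "ennreal ((1 + p \<omega> * lam \<omega>) powr \<theta>) \<le> ennreal (2 powr \<theta> * (1 + ?g \<omega>))"
        by (rule ennreal_leI)
      also have "\<dots> = ennreal (2 powr \<theta>) * (1 + ennreal (?g \<omega>))"
        by (simp add: ennreal_mult ennreal_plus[symmetric])
      finally show "ennreal ((1 + p \<omega> * lam \<omega>) powr \<theta>) \<le> ennreal (2 powr \<theta>) * (1 + ennreal (?g \<omega>))" .
    qed
    also have "\<dots> = ennreal (2 powr \<theta>) * (1 + (\<integral>\<^sup>+ \<omega>. ennreal (?g \<omega>) \<partial>M))"
      using mg by (simp add: nn_integral_cmult nn_integral_add emeasure_space_1)
    also have "\<dots> < \<infinity>" using th(2) unfolding finite_exp_def by (simp add: ennreal_mult_less_top)
    finally have "finite_exp M (\<lambda>\<omega>. (1 + p \<omega> * lam \<omega>) powr \<theta>)" unfolding finite_exp_def .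
    thus C0 unfolding C0_def using th by blast
  qed
  have h47: "C4 \<Longrightarrow> C7"
  proof -
    assume C4 then obtain \<theta> where th: "\<theta> > 0" "finite_exp M (\<lambda>\<omega>. exp (\<theta> * p \<omega> * lam \<omega>))"
      unfolding C4_def by blast
    have "finite_exp M (\<lambda>\<omega>. exp (\<theta> / real n * p \<omega> * Re (trace (G \<omega>))))"
    proof (rule fe_mono[OF th(2)])
      fix \<omega> assume w: "\<omega> \<in> space M"
      have "\<theta> / real n * (p \<omega> * Re (trace (G \<omega>))) \<le> \<theta> / real n * (real n * (p \<omega> * lam \<omega>))"
        using xy[OF w] th by (intro mult_left_mono) simp_all
      also have "\<dots> = \<theta> * (p \<omega> * lam \<omega>)" using n1 by simp
      finally show "exp (\<theta> / real n * p \<omega> * Re (trace (G \<omega>))) \<le> exp (\<theta> * p \<omega> * lam \<omega>)"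
        by (simp add: mult.assoc)
    qed
    moreover have "\<theta> / real n > 0" using th n1 by simp
    ultimately show C7 unfolding C7_def by blast
  qed
  have h74: "C7 \<Longrightarrow> C4"
  proof -
    assume C7 then obtain \<theta> where th: "\<theta> > 0" "finite_exp M (\<lambda>\<omega>. exp (\<theta> * p \<omega> * Re (trace (G \<omega>))))"
      unfolding C7_def by blast
    have "finite_exp M (\<lambda>\<omega>. exp (\<theta> * p \<omega> * lam \<omega>))"
    proof (rule fe_mono[OF th(2)])
      fix \<omega> assume w: "\<omega> \<in> space M"
      show "exp (\<theta> * p \<omega> * lam \<omega>) \<le> exp (\<theta> * p \<omega> * Re (trace (G \<omega>)))"
        using mult_left_mono[OF xley[OF w], of \<theta>] th by (simp add: mult.assoc)
    qed
    thus C4 unfolding C4_def using th by blast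
  qed
  have hL: "C1 \<Longrightarrow> light_tailed M c"
  proof -
    assume C1 then obtain \<theta> where th: "\<theta> > 0"
      "finite_exp M (\<lambda>\<omega>. (1 + p \<omega> * Re (trace (G \<omega>))) powr \<theta>)"
      unfolding C1_def by blast
    let ?f = "\<lambda>\<omega>. (1 + p \<omega> * Re (trace (G \<omega>))) powr \<theta>"
    let ?I = "\<integral>\<^sup>+ \<omega>. ennreal (?f \<omega>) \<partial>M"
    have I: "?I < \<infinity>" using th(2) unfolding finite_exp_def .
    define \<kappa> where "\<kappa> = max 1 (1 / (real CARD('nt) * N0 * W))"
    have k1: "\<kappa> \<ge> 1" unfolding \<kappa>_def by simp
    define Pc where "Pc = real (card {q. q permutes (UNIV::'nr set)})"
    have "finite {q. q permutes (UNIV::'nr set)}" by (rule finite_permutations) simp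
    moreover have "id \<in> {q. q permutes (UNIV::'nr set)}" by (simp add: permutes_id)
    ultimately have Pc1: "Pc \<ge> 1" unfolding Pc_def
      by (metis card_0_eq empty_iff less_one not_le of_nat_1 of_nat_le_iff)
    define Q where "Q = Pc * \<kappa>^n"
    have Q0: "Q > 0" unfolding Q_def using Pc1 k1 by simp
    define \<beta> where "\<beta> = \<theta> / real n * ln 2 / W"
    have b0: "\<beta> > 0" unfolding \<beta>_def using th n1 W0 by simp
    define K where "K = enn2real ?I * Q powr (\<theta> / real n)"
    have key: "exp (\<beta> * x) / Q powr (\<theta> / real n) \<le> ?f \<omega>"
      if w: "\<omega> \<in> space M" and x: "x > 0" and cx: "c \<omega> > x" for \<omega> x
    proof -
      define a where "a = p \<omega> / (real CARD('nt) * N0 * W)"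
      have a0: "a \<ge> 0" unfolding a_def using pnn[OF w] N00 W0 by simp
      have aK: "a \<le> \<kappa> * p \<omega>"
      proof -
        have "a = p \<omega> * (1 / (real CARD('nt) * N0 * W))" unfolding a_def by simp
        also have "\<dots> \<le> p \<omega> * \<kappa>" unfolding \<kappa>_def by (intro mult_left_mono pnn[OF w]) simp
        finally show ?thesis by (simp add: mult.commute)
      qed
      define d where "d = det (mat 1 + a *\<^sub>R G \<omega>)"
      have cE: "c \<omega> = W * log 2 (Re d)" unfolding c_def d_def a_def ..
      have "cmod d \<le> Pc * (1 + a * (norm (H \<omega>))^2) ^ n"
        unfolding d_def Pc_def n_def G_def by (intro det_bound entry_bound a0)
      also have "(1 + a * (norm (H \<omega>))^2) \<le> \<kappa> * (1 + p \<omega> * Re (trace (G \<omega>)))"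
      proof -
        have "a * (norm (H \<omega>))^2 \<le> \<kappa> * p \<omega> * (norm (H \<omega>))^2" by (intro mult_right_mono aK) simp
        thus ?thesis using k1 by (simp add: tE algebra_simps)
      qed
      hence "Pc * (1 + a * (norm (H \<omega>))^2) ^ n \<le> Pc * (\<kappa> * (1 + p \<omega> * Re (trace (G \<omega>)))) ^ n"
        using Pc1 a0 by (intro mult_left_mono power_mono) simp_all
      also have "\<dots> = Q * (1 + p \<omega> * Re (trace (G \<omega>))) ^ n" unfolding Q_def by (simp add: power_mult_distrib)
      finally have dB: "cmod d \<le> Q * (1 + p \<omega> * Re (trace (G \<omega>))) ^ n" .
      have "log 2 (Re d) > x / W" using cx W0 unfolding cE by (simp add: field_simps mult.commute)
      hence "ln \<bar>Re d\<bar> / ln 2 > x / W" by (simp add: log_def ln_real_def)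
      hence lnd: "ln \<bar>Re d\<bar> > x * ln 2 / W" using W0 by (simp add: field_simps)
      have "x * ln 2 / W > 0" using x W0 by simp
      hence "\<bar>Re d\<bar> \<noteq> 0" using lnd by auto
      hence "exp (x * ln 2 / W) < \<bar>Re d\<bar>" using lnd by (metis abs_ge_zero exp_less_cancel_iff exp_ln order_le_neq_trans)
      also have "\<dots> \<le> cmod d" by (rule abs_Re_le_cmod)
      finally have E: "exp (x * ln 2 / W) \<le> Q * (1 + p \<omega> * Re (trace (G \<omega>))) ^ n" using dB by simp
      have z1: "1 + p \<omega> * Re (trace (G \<omega>)) > 0" using y0[OF w] by simp
      have "exp (\<beta> * x) = (exp (x * ln 2 / W)) powr (\<theta> / real n)"
        by (simp add: powr_def \<beta>_def)
      also have "\<dots> \<le> (Q * (1 + p \<omega> * Re (trace (G \<omega>))) ^ n) powr (\<theta> / real n)"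
        using E th n1 by (intro powr_mono2) simp_all
      also have "\<dots> = Q powr (\<theta> / real n) * ?f \<omega>"
        using Q0 z1 n1 th by (simp add: powr_mult powr_realpow[symmetric] powr_powr)
      finally show ?thesis using Q0 by (simp add: divide_le_eq mult.commute)
    qed
    have "(\<lambda>x. measure M {\<omega> \<in> space M. c \<omega> > x}) \<in> O[at_top](\<lambda>x. exp (- \<beta> * x))"
    proof (rule bigoI[where c = K])
      show "\<forall>\<^sub>F x in at_top. norm (measure M {\<omega> \<in> space M. c \<omega> > x}) \<le> K * norm (exp (- \<beta> * x))"
        unfolding eventually_at_top_linorder
      proof (intro exI[of _ 1] allI impI)
        fix x :: real assume "x \<ge> 1"
        hence x0': "x > 0" by simp
        have pos: "exp (\<beta> * x) / Q powr (\<theta> / real n) > 0" using Q0 by simp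
        have "measure M {\<omega> \<in> space M. c \<omega> > x} \<le> enn2real ?I / (exp (\<beta> * x) / Q powr (\<theta> / real n))"
          by (rule markov_gen[OF ps I pos]) (use key x0' in auto)
        also have "\<dots> = K * exp (- \<beta> * x)"
          unfolding K_def using Q0 by (simp add: exp_minus field_simps)
        finally show "norm (measure M {\<omega> \<in> space M. c \<omega> > x}) \<le> K * norm (exp (- \<beta> * x))" by simp
      qed
    qed
    thus "light_tailed M c" unfolding light_tailed_def using b0 by blast
  qed
  show ?thesis using h10 h01 h21 h32 h41 h54 h06 h60 h47 h74 hL by blast
qed

end
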